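(* Let $F$ be an algebraically closed field with $\operatorname{char}F>3$, $R=F[[x,y]]$, and let $f=(f_1,f_2)\in R^2$ be a unimodal isolated complete intersection singularity with $\operatorname{ord}(f_1)=3$ and $\operatorname{ord}(f_2)\ge 3$. Then the $3$-jet $j_3(f)$ is contact equivalent (under the $3$-jet contact group acting on $R^2/\mathfrak m^4R^2$) to one of $(x^3,0)$, $(x^3,x^2y)$, $(x^3,xy^2)$, $(x^3,y^3+x^2y)$, $(x^3,y^3)$, $(x^2y,0)$, $(x^2y,xy^2)$, $(x^2y,x^3+xy^2)$, $(x^3+x^2y,\,y^3+\lambda x^2y)$ with $\lambda\neq 0$, $(x^2y,x^3+y^3)$, $(x^3+xy^2,0)$.
   Context: $\mathfrak m=\langle x,y\rangle$. $f=(f_1,f_2)\in R^2$ with $f_i\in\mathfrak m$ is an ICIS if $f_1,f_2$ is a regular sequence and $\mathfrak m^k\subset\langle f_1,f_2\rangle+I_2(J(f))$ for some $k$. $j_3(f)$ is the image of $f$ in $J_3=R^2/\mathfrak m^4R^2$; the contact jet group $\mathcal K_3=\{(j_3(U),j_3(\phi))\}$ ($U\in GL(2,R)$, $\phi\in\operatorname{Aut}(R)$) acts by $j_3(f)\mapsto j_3(U\cdot\phi(f))$. Unimodal means $\mathcal K$-modality $1$, the $\mathcal K$-modality being the modality (Arnold, Greuel–Nguyen) of a sufficiently high jet under the contact jet group action. *)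

theory Defs
  imports "HOL-Computational_Algebra.Computational_Algebra"
begin

section \<open>The ring R = F[[x,y]], realised as F[[x]][[y]]\<close>

type_synonym 'a ps2 = "'a fps fps"

definition px :: "'a::comm_ring_1 ps2" where "px = fps_const fps_X"
definition py :: "'a::comm_ring_1 ps2" where "py = fps_X"

definition coeff2 :: "'a::comm_ring_1 ps2 \<Rightarrow> nat \<Rightarrow> nat \<Rightarrow> 'a" where
  "coeff2 f i j = (f $ j) $ i"

definition mono2 :: "nat \<Rightarrow> nat \<Rightarrow> 'a::comm_ring_1 ps2" where
  "mono2 i j = px ^ i * py ^ j"

definition ord2 :: "'a::comm_ring_1 ps2 \<Rightarrow> nat" where
  "ord2 f = (LEAST n. \<exists>i j. i + j = n \<and> coeff2 f i j \<noteq> 0)"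

definition in_max :: "'a::comm_ring_1 ps2 \<Rightarrow> bool" where
  "in_max f \<longleftrightarrow> coeff2 f 0 0 = 0"

definition dx2 :: "'a::comm_ring_1 ps2 \<Rightarrow> 'a ps2" where
  "dx2 f = Abs_fps (\<lambda>j. fps_deriv (f $ j))"
definition dy2 :: "'a::comm_ring_1 ps2 \<Rightarrow> 'a ps2" where
  "dy2 f = fps_deriv f"

definition ideal_gen :: "'a::comm_ring_1 ps2 set \<Rightarrow> 'a ps2 set" where
  "ideal_gen S = {g. \<exists>n (c :: nat \<Rightarrow> 'a ps2) s. (\<forall>i<n. s i \<in> S) \<and> g = (\<Sum>i<n. c i * s i)}"

definition max_pow :: "nat \<Rightarrow> 'a::comm_ring_1 ps2 set" where
  "max_pow k = ideal_gen {mono2 i j | i j. i + j = k}"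

definition regular_seq2 :: "'a::comm_ring_1 ps2 \<Rightarrow> 'a ps2 \<Rightarrow> bool" where
  "regular_seq2 f1 f2 \<longleftrightarrow>
     (\<forall>g. g * f1 = 0 \<longrightarrow> g = 0) \<and>
     (\<forall>g. g * f2 \<in> ideal_gen {f1} \<longrightarrow> g \<in> ideal_gen {f1}) \<and>
     1 \<notin> ideal_gen {f1, f2}"

definition jac_det :: "'a::comm_ring_1 ps2 \<Rightarrow> 'a ps2 \<Rightarrow> 'a ps2" where
  "jac_det f1 f2 = dx2 f1 * dy2 f2 - dy2 f1 * dx2 f2"

definition ICIS :: "'a::comm_ring_1 ps2 \<Rightarrow> 'a ps2 \<Rightarrow> bool" where
  "ICIS f1 f2 \<longleftrightarrow> in_max f1 \<and> in_max f2 \<and> regular_seq2 f1 f2 \<and>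
     (\<exists>k. max_pow k \<subseteq> ideal_gen {f1, f2, jac_det f1 f2})"

text \<open>substitution g(phi1, phi2), for phi1, phi2 in m\<close>
definition subst2 :: "'a::comm_ring_1 ps2 \<Rightarrow> 'a ps2 \<Rightarrow> 'a ps2 \<Rightarrow> 'a ps2" where
  "subst2 g p1 p2 = Abs_fps (\<lambda>j. Abs_fps (\<lambda>i.
     \<Sum>(a, b) \<in> {(a, b). a + b \<le> i + j}. coeff2 g a b * coeff2 (p1 ^ a * p2 ^ b) i j))"

text \<open>automorphisms of R: x \<mapsto> phi1, y \<mapsto> phi2 with phi_i in m and invertible linear part\<close>
definition is_aut :: "'a::field ps2 \<times> 'a ps2 \<Rightarrow> bool" where
  "is_aut \<phi> \<longleftrightarrow> in_max (fst \<phi>) \<and> in_max (snd \<phi>) \<and>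
     coeff2 (fst \<phi>) 1 0 * coeff2 (snd \<phi>) 0 1 - coeff2 (fst \<phi>) 0 1 * coeff2 (snd \<phi>) 1 0 \<noteq> 0"

text \<open>GL(2,R): matrices ((u11,u12),(u21,u22)) whose determinant is a unit of R\<close>
definition is_GL2 :: "('a::field ps2 \<times> 'a ps2) \<times> ('a ps2 \<times> 'a ps2) \<Rightarrow> bool" where
  "is_GL2 U \<longleftrightarrow> coeff2 (fst (fst U) * snd (snd U) - snd (fst U) * fst (snd U)) 0 0 \<noteq> 0"

definition contact_act ::
  "('a::field ps2 \<times> 'a ps2) \<times> ('a ps2 \<times> 'a ps2) \<Rightarrow> 'a ps2 \<times> 'a ps2 \<Rightarrow> 'a ps2 \<times> 'a ps2 \<Rightarrow> 'a ps2 \<times> 'a ps2" where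
  "contact_act U \<phi> f =
     (let g1 = subst2 (fst f) (fst \<phi>) (snd \<phi>); g2 = subst2 (snd f) (fst \<phi>) (snd \<phi>)
      in (fst (fst U) * g1 + snd (fst U) * g2, fst (snd U) * g1 + snd (snd U) * g2))"

text \<open>k-jet of a power series / of a pair (canonical truncated representative)\<close>
definition trunc2 :: "nat \<Rightarrow> 'a::comm_ring_1 ps2 \<Rightarrow> 'a ps2" where
  "trunc2 k g = Abs_fps (\<lambda>j. Abs_fps (\<lambda>i. if i + j \<le> k then coeff2 g i j else 0))"

definition jet :: "nat \<Rightarrow> 'a::comm_ring_1 ps2 \<times> 'a ps2 \<Rightarrow> 'a ps2 \<times> 'a ps2" where
  "jet k f = (trunc2 k (fst f), trunc2 k (snd f))"

text \<open>the jet space J_k = R^2 / m^(k+1) R^2, as truncated pairs\<close>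
definition jet_space :: "nat \<Rightarrow> ('a::comm_ring_1 ps2 \<times> 'a ps2) set" where
  "jet_space k = {z. jet k z = z}"

definition K3_equiv :: "'a::field ps2 \<times> 'a ps2 \<Rightarrow> 'a ps2 \<times> 'a ps2 \<Rightarrow> bool" where
  "K3_equiv f g \<longleftrightarrow> (\<exists>U \<phi>. is_GL2 U \<and> is_aut \<phi> \<and> jet 3 (contact_act U \<phi> f) = jet 3 g)"

definition K_orbit :: "nat \<Rightarrow> 'a::field ps2 \<times> 'a ps2 \<Rightarrow> ('a ps2 \<times> 'a ps2) set" where
  "K_orbit k z = {jet k (contact_act U \<phi> z) | U \<phi>. is_GL2 U \<and> is_aut \<phi>}"

inductive_set polyfun :: "('a::comm_ring_1 ps2 \<times> 'a ps2 \<Rightarrow> 'a) set" where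
  pf_const: "(\<lambda>z. c) \<in> polyfun"
| pf_coord1: "(\<lambda>z. coeff2 (fst z) i j) \<in> polyfun"
| pf_coord2: "(\<lambda>z. coeff2 (snd z) i j) \<in> polyfun"
| pf_add: "p \<in> polyfun \<Longrightarrow> q \<in> polyfun \<Longrightarrow> (\<lambda>z. p z + q z) \<in> polyfun"
| pf_mult: "p \<in> polyfun \<Longrightarrow> q \<in> polyfun \<Longrightarrow> (\<lambda>z. p z * q z) \<in> polyfun"

definition zclosed :: "nat \<Rightarrow> ('a::comm_ring_1 ps2 \<times> 'a ps2) set \<Rightarrow> bool" where
  "zclosed k S \<longleftrightarrow> (\<exists>P \<subseteq> polyfun. S = {z \<in> jet_space k. \<forall>p\<in>P. p z = 0})"

definition zopen :: "nat \<Rightarrow> ('a::comm_ring_1 ps2 \<times> 'a ps2) set \<Rightarrow> bool" where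
  "zopen k U \<longleftrightarrow> U \<subseteq> jet_space k \<and> zclosed k (jet_space k - U)"

definition rel_closed :: "nat \<Rightarrow> ('a::comm_ring_1 ps2 \<times> 'a ps2) set \<Rightarrow> ('a ps2 \<times> 'a ps2) set \<Rightarrow> bool" where
  "rel_closed k A C \<longleftrightarrow> (\<exists>S. zclosed k S \<and> C = A \<inter> S)"

definition rel_irred_closed :: "nat \<Rightarrow> ('a::comm_ring_1 ps2 \<times> 'a ps2) set \<Rightarrow> ('a ps2 \<times> 'a ps2) set \<Rightarrow> bool" where
  "rel_irred_closed k A C \<longleftrightarrow> rel_closed k A C \<and> C \<noteq> {} \<and>
     \<not> (\<exists>C1 C2. rel_closed k A C1 \<and> rel_closed k A C2 \<and> C1 \<subset> C \<and> C2 \<subset> C \<and> C = C1 \<union> C2)"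

definition zdim :: "nat \<Rightarrow> ('a::comm_ring_1 ps2 \<times> 'a ps2) set \<Rightarrow> nat" where
  "zdim k A = Sup {n. \<exists>Z :: nat \<Rightarrow> ('a ps2 \<times> 'a ps2) set.
      (\<forall>i\<le>n. rel_irred_closed k A (Z i)) \<and> (\<forall>i<n. Z i \<subset> Z (Suc i))}"

section \<open>Modality (Greuel--Nguyen)\<close>

definition Kmod_open :: "nat \<Rightarrow> ('a::field ps2 \<times> 'a ps2) set \<Rightarrow> int" where
  "Kmod_open k U = Max {int (zdim k {z \<in> U. zdim k (K_orbit k z) = t}) - int t | t.
                         {z \<in> U. zdim k (K_orbit k z) = t} \<noteq> {}}"

definition Kmod_jet :: "nat \<Rightarrow> 'a::field ps2 \<times> 'a ps2 \<Rightarrow> int" where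
  "Kmod_jet k z = (LEAST m. \<exists>U. zopen k U \<and> z \<in> U \<and> Kmod_open k U = m)"

definition K_modality_eq :: "'a::field ps2 \<times> 'a ps2 \<Rightarrow> int \<Rightarrow> bool" where
  "K_modality_eq f m \<longleftrightarrow> (\<exists>k0. \<forall>k\<ge>k0. Kmod_jet k (jet k f) = m)"

definition unimodal :: "'a::field ps2 \<times> 'a ps2 \<Rightarrow> bool" where
  "unimodal f \<longleftrightarrow> K_modality_eq f 1"

end

theory Submission
  imports Defs
begin


datatype 'a cub = Cub 'a 'a 'a 'a

fun cadd :: "'a::comm_ring_1 cub \<Rightarrow> 'a cub \<Rightarrow> 'a cub" where
  "cadd (Cub a b c d) (Cub a' b' c' d') = Cub (a+a') (b+b') (c+c') (d+d')"
fun csc :: "'a::comm_ring_1 \<Rightarrow> 'a cub \<Rightarrow> 'a cub" where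
  "csc u (Cub a b c d) = Cub (u*a) (u*b) (u*c) (u*d)"
fun sub :: "'a::comm_ring_1 \<Rightarrow> 'a \<Rightarrow> 'a \<Rightarrow> 'a \<Rightarrow> 'a cub \<Rightarrow> 'a cub" where
"sub p q r s (Cub a b c d) = Cub
 (a*p^3 + b*p^2*r + c*p*r^2 + d*r^3)
 (a*3*p^2*q + b*(p^2*s + 2*p*q*r) + c*(2*p*r*s + q*r^2) + d*3*r^2*s)
 (a*3*p*q^2 + b*(2*p*q*s + q^2*r) + c*(p*s^2 + 2*q*r*s) + d*3*r*s^2)
 (a*q^3 + b*q^2*s + c*q*s^2 + d*s^3)"

definition act where
  "act p q r s u v w z X = (cadd (csc u (sub p q r s (fst X))) (csc v (sub p q r s (snd X))),
                            cadd (csc w (sub p q r s (fst X))) (csc z (sub p q r s (snd X))))"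

definition ceq :: "'a::field cub \<times> 'a cub \<Rightarrow> 'a cub \<times> 'a cub \<Rightarrow> bool" where
  "ceq X Y \<longleftrightarrow> (\<exists>p q r s u v w z. p*s - q*r \<noteq> 0 \<and> u*z - v*w \<noteq> 0 \<and> Y = act p q r s u v w z X)"

lemma sub_cadd: "sub p q r s (cadd x y) = cadd (sub p q r s x) (sub p q r s y)"
  by (cases x; cases y) (simp add: algebra_simps)
lemma sub_csc: "sub p q r s (csc u x) = csc u (sub p q r s x)"
  by (cases x) (simp add: algebra_simps)
lemma sub_sub: "sub p' q' r' s' (sub p q r s x) =
   sub (p*p'+q*r') (p*q'+q*s') (r*p'+s*r') (r*q'+s*s') x"
  by (cases x) (simp add: algebra_simps power2_eq_square power3_eq_cube)

lemma cadd_csc_assoc: "cadd (csc u x) (csc v y) = cadd (csc u x) (csc v y)" ..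

lemma act_act: "act p' q' r' s' u' v' w' z' (act p q r s u v w z X) =
  act (p*p'+q*r') (p*q'+q*s') (r*p'+s*r') (r*q'+s*s') (u'*u+v'*w) (u'*v+v'*z) (w'*u+z'*w) (w'*v+z'*z) X"
proof -
  obtain x y where X: "X = (x, y)" by (cases X)
  show ?thesis unfolding X act_def
    by (cases "sub (p*p'+q*r') (p*q'+q*s') (r*p'+s*r') (r*q'+s*s') x";
        cases "sub (p*p'+q*r') (p*q'+q*s') (r*p'+s*r') (r*q'+s*s') y")
       (simp_all add: sub_cadd sub_csc sub_sub algebra_simps)
qed

lemma ceq_trans: "ceq X Y \<Longrightarrow> ceq Y Z \<Longrightarrow> ceq X Z"
  unfolding ceq_def
proof (elim exE conjE)
  fix p q r s u v w z p' q' r' s' u' v' w' z'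
  assume a: "p*s - q*r \<noteq> 0" "u*z - v*w \<noteq> 0" "Y = act p q r s u v w z X"
     and b: "p'*s' - q'*r' \<noteq> 0" "u'*z' - v'*w' \<noteq> 0" "Z = act p' q' r' s' u' v' w' z' Y"
  have d1: "(p*p'+q*r')*(r*q'+s*s') - (p*q'+q*s')*(r*p'+s*r') = (p*s - q*r)*(p'*s' - q'*r')"
    by (simp add: algebra_simps)
  have d2: "(u'*u+v'*w)*(w'*v+z'*z) - (u'*v+v'*z)*(w'*u+z'*w) = (u*z - v*w)*(u'*z' - v'*w')"
    by (simp add: algebra_simps)
  show "\<exists>p q r s u v w z. p*s - q*r \<noteq> 0 \<and> u*z - v*w \<noteq> 0 \<and> Z = act p q r s u v w z X"
    apply (rule exI[of _ "p*p'+q*r'"], rule exI[of _ "p*q'+q*s'"], rule exI[of _ "r*p'+s*r'"],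
           rule exI[of _ "r*q'+s*s'"], rule exI[of _ "u'*u+v'*w"], rule exI[of _ "u'*v+v'*z"],
           rule exI[of _ "w'*u+z'*w"], rule exI[of _ "w'*v+z'*z"])
    using a b by (simp add: d1 d2 act_act)
qed

lemma sub_id: "sub 1 0 0 1 x = x"
  by (cases x) simp

lemma ceq_subI: "p*s - q*r \<noteq> 0 \<Longrightarrow> sub p q r s c1 = g1 \<Longrightarrow> sub p q r s c2 = g2 \<Longrightarrow> ceq (c1, c2) (g1, g2)"
  unfolding ceq_def
  apply (rule exI[of _ p], rule exI[of _ q], rule exI[of _ r], rule exI[of _ s])
  apply (rule exI[of _ 1], rule exI[of _ 0], rule exI[of _ 0], rule exI[of _ 1])
  by (cases g1; cases g2) (auto simp: act_def)

lemma ceq_UI: "u*z - v*w \<noteq> 0 \<Longrightarrow> cadd (csc u c1) (csc v c2) = g1 \<Longrightarrow> cadd (csc w c1) (csc z c2) = g2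
   \<Longrightarrow> ceq (c1, c2) (g1, g2)"
  unfolding ceq_def
  apply (rule exI[of _ 1], rule exI[of _ 0], rule exI[of _ 0], rule exI[of _ 1])
  apply (rule exI[of _ u], rule exI[of _ v], rule exI[of _ w], rule exI[of _ z])
  by (auto simp: act_def sub_id)

lemma ceq_refl: "ceq X X"
  unfolding ceq_def
  apply (rule exI[of _ 1], rule exI[of _ 0], rule exI[of _ 0], rule exI[of _ 1])
  apply (rule exI[of _ 1], rule exI[of _ 0], rule exI[of _ 0], rule exI[of _ 1])
  by (cases "fst X"; cases "snd X") (auto simp: act_def sub_id prod_eq_iff)

lemma sub_zero[simp]: "sub p q r s (Cub 0 0 0 0) = Cub 0 0 0 0" by simp

lemma sub_nonzero:
  fixes c :: "'a::field cub"
  assumes "p*s - q*r \<noteq> 0" "c \<noteq> Cub 0 0 0 0"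
  shows "sub p q r s c \<noteq> Cub 0 0 0 0"
proof
  assume h: "sub p q r s c = Cub 0 0 0 0"
  define D where "D = p*s - q*r"
  have D: "D \<noteq> 0" using assms D_def by simp
  have "sub (s/D) (-q/D) (-r/D) (p/D) (sub p q r s c) =
        sub (p*(s/D)+q*(-r/D)) (p*(-q/D)+q*(p/D)) (r*(s/D)+s*(-r/D)) (r*(-q/D)+s*(p/D)) c"
    by (rule sub_sub)
  also have "\<dots> = sub 1 0 0 1 c"
  proof -
    have e1: "p*(s/D)+q*(-r/D) = 1" "p*(-q/D)+q*(p/D) = 0" "r*(s/D)+s*(-r/D) = 0" "r*(-q/D)+s*(p/D) = 1"
      using D by (simp_all add: field_simps, simp_all add: D_def algebra_simps)
    show ?thesis by (simp only: e1)
  qed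
  finally have eq: "sub (s/D) (-q/D) (-r/D) (p/D) (sub p q r s c) = sub 1 0 0 1 c" .
  have "c = Cub 0 0 0 0" using eq unfolding h sub_id sub_zero by simp
  then show False using assms(2) by simp
qed

lemma root_gen:
  fixes f :: "nat \<Rightarrow> 'a::alg_closed_field"
  assumes "n > 0" "f n \<noteq> 0"
  shows "\<exists>x. (\<Sum>k\<le>n. f k * x ^ k) = 0"
  using assms by (rule alg_closed)

lemma root2: "\<exists>x::'a::alg_closed_field. x^2 = a"
proof -
  obtain x :: 'a where "(\<Sum>k\<le>2. (if k = 0 then -a else if k = 2 then 1 else 0) * x ^ k) = 0"
    using root_gen[of 2 "\<lambda>k. if k = 0 then -a else if k = 2 then 1 else 0"] by auto
  then have "x^2 - a = 0" by (simp add: numeral_2_eq_2)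
  then show ?thesis by auto
qed

lemma root3: "\<exists>x::'a::alg_closed_field. x^3 = a"
proof -
  obtain x :: 'a where "(\<Sum>k\<le>3. (if k = 0 then -a else if k = 3 then 1 else 0) * x ^ k) = 0"
    using root_gen[of 3 "\<lambda>k. if k = 0 then -a else if k = 3 then 1 else 0"] by auto
  then have "x^3 - a = 0" by (simp add: numeral_3_eq_3)
  then show ?thesis by auto
qed

lemma root_cubic: "(a::'a::alg_closed_field) \<noteq> 0 \<Longrightarrow> \<exists>x. a*x^3 + b*x^2 + c*x + d = 0"
proof -
  assume a: "a \<noteq> 0"
  obtain x :: 'a where "(\<Sum>k\<le>3. (if k = 0 then d else if k = 1 then c else if k = 2 then b else a) * x ^ k) = 0"
    using root_gen[of 3 "\<lambda>k. if k = 0 then d else if k = 1 then c else if k = 2 then b else a"] a by auto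
  then have "a*x^3 + b*x^2 + c*x + d = 0" by (simp add: numeral_3_eq_3 numeral_2_eq_2 algebra_simps)
  then show ?thesis by auto
qed

lemma root_quartic: "(e::'a::alg_closed_field) \<noteq> 0 \<Longrightarrow> \<exists>x. e*x^4 + f*x^3 + g*x^2 + h*x + k = 0"
proof -
  assume a: "e \<noteq> 0"
  obtain x :: 'a where "(\<Sum>j\<le>4. (if j = 0 then k else if j = 1 then h else if j = 2 then g else if j = 3 then f else e) * x ^ j) = 0"
    using root_gen[of 4 "\<lambda>j. if j = 0 then k else if j = 1 then h else if j = 2 then g else if j = 3 then f else e"] a by auto
  then have "e*x^4 + f*x^3 + g*x^2 + h*x + k = 0"
    by (simp add: eval_nat_numeral algebra_simps)
  then show ?thesis by auto
qed



definition normal :: "'a::field cub \<times> 'a cub \<Rightarrow> bool" where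
  "normal P \<longleftrightarrow> P \<in> {(Cub 1 0 0 0, Cub 0 0 0 0), (Cub 1 0 0 0, Cub 0 1 0 0), (Cub 1 0 0 0, Cub 0 0 1 0),
     (Cub 1 0 0 0, Cub 0 1 0 1), (Cub 1 0 0 0, Cub 0 0 0 1), (Cub 0 1 0 0, Cub 0 0 0 0),
     (Cub 0 1 0 0, Cub 0 0 1 0), (Cub 0 1 0 0, Cub 1 0 1 0), (Cub 0 1 0 0, Cub 1 0 0 1),
     (Cub 1 0 1 0, Cub 0 0 0 0)} \<or> (\<exists>l. l \<noteq> 0 \<and> P = (Cub 1 1 0 0, Cub 0 l 0 1))"

abbreviation "NF X \<equiv> (\<exists>P. normal P \<and> ceq X P)"

lemma NF_step: "ceq X Y \<Longrightarrow> NF Y \<Longrightarrow> NF X"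
  using ceq_trans by blast

lemma NF_normal: "normal X \<Longrightarrow> NF X"
  using ceq_refl by blast

context
  fixes dummy :: "'a::alg_closed_field"
  assumes two: "(2::'a) \<noteq> 0" and three: "(3::'a) \<noteq> 0"
begin

lemma S0:
  fixes a b c :: 'a
  assumes nz: "Cub a b c 0 \<noteq> Cub 0 0 0 0"
  shows "NF (Cub a b c 0, Cub 0 0 0 0)"
proof (cases "c = 0")
  case True
  show ?thesis
  proof (cases "b = 0")
    case True
    with \<open>c = 0\<close> nz have a: "a \<noteq> 0" by auto
    have "ceq (Cub a b c 0, Cub 0 0 0 0) (Cub 1 0 0 0, Cub 0 0 0 0)"
      by (rule ceq_UI[of "1/a" 1 0 0]) (use a True \<open>c = 0\<close> in simp_all)
    then show ?thesis by (rule NF_step) (rule NF_normal, simp add: normal_def)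
  next
    case False
    have "ceq (Cub a b c 0, Cub 0 0 0 0) (Cub 0 1 0 0, Cub 0 0 0 0)"
      by (rule ceq_subI[of 1 "1/b" 0 "-a/b"]) (use False \<open>c = 0\<close> in \<open>simp_all add: field_simps\<close>)
    then show ?thesis by (rule NF_step) (rule NF_normal, simp add: normal_def)
  qed
next
  case False
  define k where "k = -b/(2*c)"
  define a' where "a' = a + b*k + c*k^2"
  have st1: "ceq (Cub a b c 0, Cub 0 0 0 0) (Cub a' 0 c 0, Cub 0 0 0 0)"
    by (rule ceq_subI[of 1 1 0 k]) (use False two in \<open>simp_all add: a'_def k_def field_simps\<close>)
  show ?thesis
  proof (cases "a' = 0")
    case True
    have s2: "ceq (Cub a' 0 c 0, Cub 0 0 0 0) (Cub 0 c 0 0, Cub 0 0 0 0)"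
      by (rule ceq_subI[of 0 0 1 1]) (use True in simp_all)
    have s3: "ceq (Cub 0 c 0 0, Cub 0 0 0 0) (Cub 0 1 0 0, Cub 0 0 0 0)"
      by (rule ceq_UI[of "1/c" 1 0 0]) (use False in simp_all)
    have n: "normal (Cub 0 1 0 0, Cub 0 0 0 (0::'a))" by (simp add: normal_def)
    show ?thesis by (rule NF_step[OF st1 NF_step[OF s2 NF_step[OF s3 NF_normal[OF n]]]])
  next
    case a'0: False
    obtain \<sigma> where sg: "\<sigma>^2 = a'/c" using root2 by blast
    have sn: "\<sigma> \<noteq> 0" using sg a'0 False by auto
    have s2: "ceq (Cub a' 0 c 0, Cub 0 0 0 0) (Cub a' 0 a' 0, Cub 0 0 0 0)"
      by (rule ceq_subI[of 1 \<sigma> 0 0]) (use sn sg False in \<open>simp_all add: field_simps\<close>)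
    have s3: "ceq (Cub a' 0 a' 0, Cub 0 0 0 0) (Cub 1 0 1 0, Cub 0 0 0 0)"
      by (rule ceq_UI[of "1/a'" 1 0 0]) (use a'0 in simp_all)
    have n: "normal (Cub 1 0 1 0, Cub 0 0 0 (0::'a))" by (simp add: normal_def)
    show ?thesis by (rule NF_step[OF st1 NF_step[OF s2 NF_step[OF s3 NF_normal[OF n]]]])
  qed
qed

lemma S:
  fixes cc :: "'a cub"
  assumes nz: "cc \<noteq> Cub 0 0 0 0"
  shows "NF (cc, Cub 0 0 0 0)"
proof -
  obtain a b c d where cc: "cc = Cub a b c d" by (cases cc)
  show ?thesis
  proof (cases "a = 0")
    case True
    have st: "ceq (cc, Cub 0 0 0 0) (Cub d c b 0, Cub 0 0 0 0)"
      unfolding cc by (rule ceq_subI[where p=0 and q=1 and r=1 and s=0]) (use True in simp_all)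
    have "Cub d c b 0 \<noteq> Cub 0 0 0 0" using nz True cc by auto
    then show ?thesis by (rule NF_step[OF st S0])
  next
    case False
    obtain r where r: "a*r^3 + b*r^2 + c*r + d = 0" using root_cubic[OF False] by blast
    have st: "ceq (cc, Cub 0 0 0 0) (Cub a (3*a*r + b) (3*a*r^2 + 2*b*r + c) 0, Cub 0 0 0 0)"
      unfolding cc by (rule ceq_subI[where p=1 and q=r and r=0 and s=1])
        (use r in \<open>simp_all add: algebra_simps\<close>)
    have "Cub a (3*a*r + b) (3*a*r^2 + 2*b*r + c) 0 \<noteq> Cub 0 0 0 0" using False by auto
    then show ?thesis by (rule NF_step[OF st S0])
  qed
qed

lemma B1:
  fixes a b c d :: 'a
  shows "NF (Cub 1 0 0 0, Cub a b c d)"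
proof -
  let ?X = "Cub 1 0 0 (0::'a)"
  have st0: "ceq (?X, Cub a b c d) (?X, Cub 0 b c d)"
    by (rule ceq_UI[where u=1 and v=0 and w="-a" and z=1]) simp_all
  have "NF (?X, Cub 0 b c d)"
  proof (cases "d = 0")
    case False
    define k where "k = -c/(3*d)"
    define a' where "a' = b*k + c*k^2 + d*k^3"
    define b' where "b' = b + 2*c*k + 3*d*k^2"
    have st1: "ceq (?X, Cub 0 b c d) (?X, Cub a' b' 0 d)"
      by (rule ceq_subI[where p=1 and q=0 and r=k and s=1])
        (use False three in \<open>simp_all add: a'_def b'_def k_def field_simps\<close>)
    have st2: "ceq (?X, Cub a' b' 0 d) (?X, Cub 0 b' 0 d)"
      by (rule ceq_UI[where u=1 and v=0 and w="-a'" and z=1]) simp_all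
    have "NF (?X, Cub 0 b' 0 d)"
    proof (cases "b' = 0")
      case True
      have st3: "ceq (?X, Cub 0 b' 0 d) (?X, Cub 0 0 0 1)"
        by (rule ceq_UI[where u=1 and v=0 and w=0 and z="1/d"]) (use True False in simp_all)
      have n: "normal (?X, Cub 0 0 0 1)" by (simp add: normal_def)
      show ?thesis by (rule NF_step[OF st3 NF_normal[OF n]])
    next
      case b'0: False
      obtain \<sigma> where sg: "\<sigma>^2 = b'/d" using root2 by blast
      have sn: "\<sigma> \<noteq> 0" using sg b'0 False by auto
      have e: "d*\<sigma>^3 = b'*\<sigma>" using sg False by (simp add: power3_eq_cube power2_eq_square field_simps)
      have st3: "ceq (?X, Cub 0 b' 0 d) (?X, Cub 0 (b'*\<sigma>) 0 (b'*\<sigma>))"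
        by (rule ceq_subI[where p=1 and q=0 and r=0 and s=\<sigma>]) (use sn e in \<open>simp_all add: algebra_simps\<close>)
      have st4: "ceq (?X, Cub 0 (b'*\<sigma>) 0 (b'*\<sigma>)) (?X, Cub 0 1 0 1)"
        by (rule ceq_UI[where u=1 and v=0 and w=0 and z="1/(b'*\<sigma>)"]) (use sn b'0 in simp_all)
      have n: "normal (?X, Cub 0 1 0 1)" by (simp add: normal_def)
      show ?thesis by (rule NF_step[OF st3 NF_step[OF st4 NF_normal[OF n]]])
    qed
    then show ?thesis by (rule NF_step[OF st1 NF_step[OF st2]])
  next
    case d0: True
    show ?thesis
    proof (cases "c = 0")
      case False
      define k where "k = -b/(2*c)"
      define a' where "a' = b*k + c*k^2"
      have st1: "ceq (?X, Cub 0 b c d) (?X, Cub a' 0 c 0)"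
        by (rule ceq_subI[where p=1 and q=0 and r=k and s=1])
          (use False two d0 in \<open>simp_all add: a'_def k_def field_simps\<close>)
      have st2: "ceq (?X, Cub a' 0 c 0) (?X, Cub 0 0 1 0)"
        by (rule ceq_UI[where u=1 and v=0 and w="-a'/c" and z="1/c"]) (use False in simp_all)
      have n: "normal (?X, Cub 0 0 1 0)" by (simp add: normal_def)
      show ?thesis by (rule NF_step[OF st1 NF_step[OF st2 NF_normal[OF n]]])
    next
      case c0: True
      show ?thesis
      proof (cases "b = 0")
        case True
        have n: "normal (?X, Cub 0 b c d)" using True c0 d0 by (simp add: normal_def)
        show ?thesis by (rule NF_normal[OF n])
      next
        case False
        have st2: "ceq (?X, Cub 0 b c d) (?X, Cub 0 1 0 0)"
          by (rule ceq_UI[where u=1 and v=0 and w=0 and z="1/b"]) (use False c0 d0 in simp_all)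
        have n: "normal (?X, Cub 0 1 0 0)" by (simp add: normal_def)
        show ?thesis by (rule NF_step[OF st2 NF_normal[OF n]])
      qed
    qed
  qed
  then show ?thesis by (rule NF_step[OF st0])
qed

lemma B2a:
  fixes a b c :: 'a
  shows "NF (Cub 0 1 0 0, Cub a b c 0)"
proof -
  let ?Y = "Cub 0 1 0 (0::'a)"
  have st0: "ceq (?Y, Cub a b c 0) (?Y, Cub a 0 c 0)"
    by (rule ceq_UI[where u=1 and v=0 and w="-b" and z=1]) simp_all
  have "NF (?Y, Cub a 0 c 0)"
  proof (cases "a = 0")
    case a0: True
    show ?thesis
    proof (cases "c = 0")
      case True
      have n: "normal (?Y, Cub a 0 c 0)" using True a0 by (simp add: normal_def)
      show ?thesis by (rule NF_normal[OF n])
    next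
      case False
      have st2: "ceq (?Y, Cub a 0 c 0) (?Y, Cub 0 0 1 0)"
        by (rule ceq_UI[where u=1 and v=0 and w=0 and z="1/c"]) (use False a0 in simp_all)
      have n: "normal (?Y, Cub 0 0 1 0)" by (simp add: normal_def)
      show ?thesis by (rule NF_step[OF st2 NF_normal[OF n]])
    qed
  next
    case a0: False
    show ?thesis
    proof (cases "c = 0")
      case True
      have st2: "ceq (?Y, Cub a 0 c 0) (Cub 1 0 0 0, Cub 0 1 0 0)"
        by (rule ceq_UI[where u=0 and v="1/a" and w=1 and z=0]) (use True a0 in simp_all)
      have n: "normal (Cub 1 0 0 0, Cub 0 1 0 (0::'a))" by (simp add: normal_def)
      show ?thesis by (rule NF_step[OF st2 NF_normal[OF n]])
    next
      case False
      obtain \<sigma> where sg: "\<sigma>^2 = a/c" using root2 by blast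
      have sn: "\<sigma> \<noteq> 0" using sg a0 False by auto
      have e: "c*\<sigma>^2 = a" using sg False by (simp add: field_simps)
      have st2: "ceq (?Y, Cub a 0 c 0) (Cub 0 \<sigma> 0 0, Cub a 0 a 0)"
        by (rule ceq_subI[where p=1 and q=0 and r=0 and s=\<sigma>]) (use sn e in \<open>simp_all add: algebra_simps\<close>)
      have st3: "ceq (Cub 0 \<sigma> 0 0, Cub a 0 a 0) (?Y, Cub 1 0 1 0)"
        by (rule ceq_UI[where u="1/\<sigma>" and v=0 and w=0 and z="1/a"]) (use sn a0 in simp_all)
      have n: "normal (?Y, Cub 1 0 1 0)" by (simp add: normal_def)
      show ?thesis by (rule NF_step[OF st2 NF_step[OF st3 NF_normal[OF n]]])
    qed
  qed
  then show ?thesis by (rule NF_step[OF st0])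
qed

lemma B2g:
  fixes e :: 'a
  shows "NF (Cub 0 1 0 0, Cub 1 0 e 1)"
proof -
  let ?Y = "Cub 0 1 0 (0::'a)"
  show ?thesis
  proof (cases "e = 0")
    case True
    have n: "normal (?Y, Cub 1 0 e 1)" using True by (simp add: normal_def)
    show ?thesis by (rule NF_normal[OF n])
  next
    case e0: False
    show ?thesis
    proof (cases "e^3 = 27")
      case False
      define l where "l = 27/e^3 - 1"
      define \<alpha> where "\<alpha> = -3/e"
      have l0: "l \<noteq> 0" using False e0 by (simp add: l_def field_simps)
      have an: "\<alpha> \<noteq> 0" using e0 three by (simp add: \<alpha>_def)
      have ea: "e*\<alpha> = -3" using e0 by (simp add: \<alpha>_def)
      have ea2: "\<alpha>*(e*2) = -6"
      proof -
        have "\<alpha>*(e*2) = 2*(e*\<alpha>)" by (simp add: algebra_simps)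
        then show ?thesis using ea by simp
      qed
      have a3: "\<alpha>^3 = -(1+l)" using e0 by (simp add: \<alpha>_def l_def power_divide field_simps)
      have a5: "\<alpha>^2 + (\<alpha>^5 + l*\<alpha>^2) = 0"
      proof -
        have "\<alpha>^5 = \<alpha>^2*\<alpha>^3" by (simp flip: power_add)
        then show ?thesis using a3 by (simp add: algebra_simps)
      qed
      have st1: "ceq (?Y, Cub 1 0 e 1) (Cub (\<alpha>^2) (\<alpha>^2) 0 0, Cub (\<alpha>^3 - 2) (-3) 0 1)"
        by (rule ceq_subI[where p=\<alpha> and q=0 and r=1 and s=1])
          (use an ea ea2 in \<open>simp_all add: algebra_simps\<close>)
      have st2: "ceq (Cub (\<alpha>^2) (\<alpha>^2) 0 0, Cub (\<alpha>^3 - 2) (-3) 0 1) (Cub 1 1 0 0, Cub 0 l 0 1)"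
        by (rule ceq_UI[where u="1/\<alpha>^2" and v=0 and w="(l+3)/\<alpha>^2" and z=1])
          (use an a3 a5 in \<open>simp_all add: field_simps\<close>)
      have n: "normal (Cub 1 1 0 0, Cub 0 l 0 1)" using l0 by (auto simp add: normal_def)
      show ?thesis by (rule NF_step[OF st1 NF_step[OF st2 NF_normal[OF n]]])
    next
      case True
      define \<mu> where "\<mu> = (e/3)^2"
      have t27: "(27::'a) \<noteq> 0"
        using power_not_zero[OF three, of 3] by simp
      have e3: "(e/3)^3 = 1" using True three t27 by (simp add: power_divide)
      have m3: "\<mu>^3 = 1"
      proof -
        have "\<mu>^3 = ((e/3)^3)^2" unfolding \<mu>_def power_mult[symmetric] by simp
        then show ?thesis using e3 by simp
      qed
      have m2: "3*\<mu>^2 = e"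
      proof -
        have "\<mu>^2 = (e/3)^3 * (e/3)" unfolding \<mu>_def power_mult[symmetric] power_Suc2[symmetric] by simp
        then show ?thesis using three e3 by (simp add: mult.commute)
      qed
      have st1: "ceq (?Y, Cub 1 0 e 1) (Cub 1 (3*\<mu>) e 1, ?Y)"
        by (rule ceq_UI[where u="3*\<mu>" and v=1 and w=1 and z=0]) simp_all
      have st2: "ceq (Cub 1 (3*\<mu>) e 1, ?Y) (Cub 1 0 0 0, Cub 0 1 (-2*\<mu>) (\<mu>^2))"
        by (rule ceq_subI[where p=1 and q="-\<mu>" and r=0 and s=1])
          (use m3 m2[symmetric] in \<open>simp_all add: algebra_simps power2_eq_square power3_eq_cube\<close>)
      show ?thesis by (rule NF_step[OF st1 NF_step[OF st2 B1]])
    qed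
  qed
qed

lemma B2:
  fixes a b c d :: 'a
  shows "NF (Cub 0 1 0 0, Cub a b c d)"
proof -
  let ?Y = "Cub 0 1 0 (0::'a)"
  have st0: "ceq (?Y, Cub a b c d) (?Y, Cub a 0 c d)"
    by (rule ceq_UI[where u=1 and v=0 and w="-b" and z=1]) simp_all
  have "NF (?Y, Cub a 0 c d)"
  proof (cases "d = 0")
    case True
    then show ?thesis using B2a by simp
  next
    case d0: False
    show ?thesis
    proof (cases "a = 0")
      case a0: True
      show ?thesis
      proof (cases "c = 0")
        case True
        have st1: "ceq (?Y, Cub a 0 c d) (Cub 0 0 1 0, Cub d 0 0 0)"
          by (rule ceq_subI[where p=0 and q=1 and r=1 and s=0]) (use True a0 in simp_all)
        have st2: "ceq (Cub 0 0 1 0, Cub d 0 0 0) (Cub 1 0 0 0, Cub 0 0 1 0)"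
          by (rule ceq_UI[where u=0 and v="1/d" and w=1 and z=0]) (use d0 in simp_all)
        have n: "normal (Cub 1 0 0 0, Cub 0 0 1 (0::'a))" by (simp add: normal_def)
        show ?thesis by (rule NF_step[OF st1 NF_step[OF st2 NF_normal[OF n]]])
      next
        case False
        define k where "k = -d/c"
        have kc: "c*k + d = 0" using False by (simp add: k_def)
        have st1: "ceq (?Y, Cub a 0 c d) (Cub 0 1 (2*k) (k^2), Cub 0 0 c 0)"
          by (rule ceq_subI[where p=1 and q=k and r=0 and s=1]) (use a0 kc in \<open>simp_all add: algebra_simps\<close>)
        have st2: "ceq (Cub 0 1 (2*k) (k^2), Cub 0 0 c 0) (Cub (k^2) (2*k) 1 0, Cub 0 c 0 0)"
          by (rule ceq_subI[where p=0 and q=1 and r=1 and s=0]) simp_all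
        have st3: "ceq (Cub (k^2) (2*k) 1 0, Cub 0 c 0 0) (?Y, Cub (k^2) 0 1 0)"
          by (rule ceq_UI[where u=0 and v="1/c" and w=1 and z="-2*k/c"]) (use False in simp_all)
        show ?thesis by (rule NF_step[OF st1 NF_step[OF st2 NF_step[OF st3 B2a]]])
      qed
    next
      case a0: False
      obtain \<alpha> where al: "\<alpha>^3 = 1/a" using root3 by blast
      obtain \<delta> where de: "\<delta>^3 = 1/d" using root3 by blast
      have an: "\<alpha> \<noteq> 0" using al a0 by auto
      have dn: "\<delta> \<noteq> 0" using de d0 by auto
      have al': "a*\<alpha>^3 = 1" using al a0 by simp
      have de': "d*\<delta>^3 = 1" using de d0 by simp
      have st1: "ceq (?Y, Cub a 0 c d) (Cub 0 (\<alpha>^2*\<delta>) 0 0, Cub 1 0 (c*\<alpha>*\<delta>^2) 1)"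
        by (rule ceq_subI[where p=\<alpha> and q=0 and r=0 and s=\<delta>]) (use an dn al' de' in \<open>simp_all add: algebra_simps\<close>)
      have st2: "ceq (Cub 0 (\<alpha>^2*\<delta>) 0 0, Cub 1 0 (c*\<alpha>*\<delta>^2) 1) (?Y, Cub 1 0 (c*\<alpha>*\<delta>^2) 1)"
        by (rule ceq_UI[where u="1/(\<alpha>^2*\<delta>)" and v=0 and w=0 and z=1]) (use an dn in simp_all)
      show ?thesis by (rule NF_step[OF st1 NF_step[OF st2 B2g]])
    qed
  qed
  then show ?thesis by (rule NF_step[OF st0])
qed

lemma E:
  fixes \<alpha> \<beta> :: 'a
  assumes nz: "Cub \<alpha> \<beta> 0 0 \<noteq> Cub 0 0 0 0"
  shows "NF (Cub \<alpha> \<beta> 0 0, cc)"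
proof (cases "\<beta> = 0")
  case True
  then have an: "\<alpha> \<noteq> 0" using nz by auto
  obtain a b c d where cc: "cc = Cub a b c d" by (cases cc)
  have st: "ceq (Cub \<alpha> \<beta> 0 0, cc) (Cub 1 0 0 0, cc)"
    unfolding cc by (rule ceq_UI[where u="1/\<alpha>" and v=0 and w=0 and z=1]) (use an True in simp_all)
  have "NF (Cub 1 0 0 0, cc)" unfolding cc by (rule B1)
  then show ?thesis by (rule NF_step[OF st])
next
  case False
  have st: "ceq (Cub \<alpha> \<beta> 0 0, cc) (Cub 0 1 0 0, sub 1 0 (-\<alpha>/\<beta>) (1/\<beta>) cc)"
    by (rule ceq_subI[where p=1 and q=0 and r="-\<alpha>/\<beta>" and s="1/\<beta>"]) (use False in simp_all)
  obtain a b c d where cc: "sub 1 0 (-\<alpha>/\<beta>) (1/\<beta>) cc = Cub a b c d" by (cases "sub 1 0 (-\<alpha>/\<beta>) (1/\<beta>) cc")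
  have "NF (Cub 0 1 0 0, sub 1 0 (-\<alpha>/\<beta>) (1/\<beta>) cc)" unfolding cc by (rule B2)
  then show ?thesis by (rule NF_step[OF st])
qed

lemma D0:
  fixes a1 b1 e1 d1 a2 b2 e2 d2 :: 'a
  assumes nz: "Cub a1 b1 e1 d1 \<noteq> Cub 0 0 0 0"
    and det: "e1*d2 - e2*d1 = 0"
  shows "NF (Cub a1 b1 e1 d1, Cub a2 b2 e2 d2)"
proof (cases "\<exists>t. Cub a2 b2 e2 d2 = csc t (Cub a1 b1 e1 d1)")
  case True
  then obtain t where t: "Cub a2 b2 e2 d2 = csc t (Cub a1 b1 e1 d1)" by blast
  have st: "ceq (Cub a1 b1 e1 d1, Cub a2 b2 e2 d2) (Cub a1 b1 e1 d1, Cub 0 0 0 0)"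
    by (rule ceq_UI[where u=1 and v=0 and w="-t" and z=1]) (use t in simp_all)
  show ?thesis by (rule NF_step[OF st S[OF nz]])
next
  case indep: False
  obtain s t where st0: "s \<noteq> 0 \<or> t \<noteq> 0" and k1: "s*e1 + t*e2 = 0" and k2: "s*d1 + t*d2 = 0"
  proof -
    consider "e1 \<noteq> 0 \<or> e2 \<noteq> 0" | "e1 = 0 \<and> e2 = 0 \<and> (d1 \<noteq> 0 \<or> d2 \<noteq> 0)" | "e1 = 0 \<and> e2 = 0 \<and> d1 = 0 \<and> d2 = 0"
      by blast
    then show ?thesis
    proof cases
      case 1
      show ?thesis by (rule that[of e2 "-e1"]) (use 1 det in \<open>auto simp: algebra_simps\<close>)
    next
      case 2
      show ?thesis by (rule that[of d2 "-d1"]) (use 2 in \<open>auto simp: algebra_simps\<close>)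
    next
      case 3
      show ?thesis by (rule that[of 1 0]) (use 3 in auto)
    qed
  qed
  define m where "m = Cub (s*a1 + t*a2) (s*b1 + t*b2) 0 (0::'a)"
  show ?thesis
  proof (cases "t = 0")
    case False
    have mnz: "m \<noteq> Cub 0 0 0 0"
    proof
      assume "m = Cub 0 0 0 0"
      then have z: "s*a1 + t*a2 = 0" "s*b1 + t*b2 = 0" by (auto simp: m_def)
      have h: "a2 = (-s/t)*a1" "b2 = (-s/t)*b1" "e2 = (-s/t)*e1" "d2 = (-s/t)*d1"
        using z k1 k2 False by (simp_all add: field_simps, algebra+)
      have "Cub a2 b2 e2 d2 = csc (-s/t) (Cub a1 b1 e1 d1)"
        by (simp only: h csc.simps)
      then show False using indep by blast
    qed
    have st: "ceq (Cub a1 b1 e1 d1, Cub a2 b2 e2 d2) (m, Cub a1 b1 e1 d1)"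
      by (rule ceq_UI[where u=s and v=t and w=1 and z=0]) (use False k1 k2 in \<open>simp_all add: m_def\<close>)
    show ?thesis by (rule NF_step[OF st[unfolded m_def] E[OF mnz[unfolded m_def]]])
  next
    case True
    then have s0: "s \<noteq> 0" using st0 by simp
    have ed: "e1 = 0" "d1 = 0" using k1 k2 True s0 by auto
    have mnz: "m \<noteq> Cub 0 0 0 0" using nz ed True s0 by (auto simp: m_def)
    have st: "ceq (Cub a1 b1 e1 d1, Cub a2 b2 e2 d2) (m, Cub a2 b2 e2 d2)"
      by (rule ceq_UI[where u=s and v=0 and w=0 and z=1]) (use True ed s0 in \<open>simp_all add: m_def\<close>)
    show ?thesis by (rule NF_step[OF st[unfolded m_def] E[OF mnz[unfolded m_def]]])
  qed
qed

lemma Main_model: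
  fixes c1 c2 :: "'a cub"
  assumes nz: "c1 \<noteq> Cub 0 0 0 0"
  shows "NF (c1, c2)"
proof -
  obtain a1 b1 e1 d1 where c1: "c1 = Cub a1 b1 e1 d1" by (cases c1)
  obtain a2 b2 e2 d2 where c2: "c2 = Cub a2 b2 e2 d2" by (cases c2)
  show ?thesis
  proof (cases "a2*b1 - a1*b2 = 0")
    case True
    have st: "ceq (c1, c2) (Cub d1 e1 b1 a1, Cub d2 e2 b2 a2)"
      unfolding c1 c2 by (rule ceq_subI[where p=0 and q=1 and r=1 and s=0]) simp_all
    have nz': "Cub d1 e1 b1 a1 \<noteq> Cub 0 0 0 0" using nz c1 by auto
    have det: "b1*a2 - b2*a1 = 0" using True by (simp add: algebra_simps)
    show ?thesis by (rule NF_step[OF st D0[OF nz' det]])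
  next
    case False
    obtain r where r: "(a2*b1 - a1*b2)*r^4 + (2*(a2*e1 - a1*e2))*r^3 + (b2*e1 - b1*e2 + 3*(a2*d1 - a1*d2))*r^2
        + (2*(b2*d1 - b1*d2))*r + (d1*e2 - d2*e1) = 0"
      using root_quartic[OF False] by blast
    let ?s1 = "Cub a1 (3*a1*r + b1) (3*a1*r^2 + 2*b1*r + e1) (a1*r^3 + b1*r^2 + e1*r + d1)"
    let ?s2 = "Cub a2 (3*a2*r + b2) (3*a2*r^2 + 2*b2*r + e2) (a2*r^3 + b2*r^2 + e2*r + d2)"
    have st: "ceq (c1, c2) (?s1, ?s2)"
      unfolding c1 c2 by (rule ceq_subI[where p=1 and q=r and r=0 and s=1]) (simp_all add: algebra_simps)
    have nz': "?s1 \<noteq> Cub 0 0 0 0"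
    proof
      assume "?s1 = Cub 0 0 0 0"
      then have "a1 = 0" "b1 = 0" "e1 = 0" "d1 = 0" by auto
      then show False using nz c1 by simp
    qed
    have det: "(3*a1*r^2 + 2*b1*r + e1)*(a2*r^3 + b2*r^2 + e2*r + d2) - (3*a2*r^2 + 2*b2*r + e2)*(a1*r^3 + b1*r^2 + e1*r + d1) = 0"
    proof -
      have "(3*a1*r^2 + 2*b1*r + e1)*(a2*r^3 + b2*r^2 + e2*r + d2) - (3*a2*r^2 + 2*b2*r + e2)*(a1*r^3 + b1*r^2 + e1*r + d1)
        = -((a2*b1 - a1*b2)*r^4 + (2*(a2*e1 - a1*e2))*r^3 + (b2*e1 - b1*e2 + 3*(a2*d1 - a1*d2))*r^2
        + (2*(b2*d1 - b1*d2))*r + (d1*e2 - d2*e1))"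
        by (simp add: algebra_simps eval_nat_numeral)
      then show ?thesis unfolding r by simp
    qed
    show ?thesis by (rule NF_step[OF st D0[OF nz' det]])
  qed
qed

end


abbreviation C :: "'a::comm_ring_1 \<Rightarrow> 'a ps2" where "C c \<equiv> fps_const (fps_const c)"

lemma coeff2_add[simp]: "coeff2 (f + g) i j = coeff2 f i j + coeff2 g i j"
  by (simp add: coeff2_def)
lemma coeff2_diff[simp]: "coeff2 (f - g) i j = coeff2 f i j - coeff2 g i j"
  by (simp add: coeff2_def)
lemma coeff2_C_mult[simp]: "coeff2 (C c * f) i j = c * coeff2 f i j"
  by (simp add: coeff2_def)
lemma coeff2_C[simp]: "coeff2 (C c) i j = (if i = 0 \<and> j = 0 then c else 0)"
  by (simp add: coeff2_def)
lemma coeff2_0[simp]: "coeff2 0 i j = 0"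
  by (simp add: coeff2_def)
lemma coeff2_1[simp]: "coeff2 1 i j = (if i = 0 \<and> j = 0 then 1 else 0)"
  by (simp add: coeff2_def)
lemma coeff2_px_mult[simp]: "coeff2 (px * f) i j = (if i = 0 then 0 else coeff2 f (i - 1) j)"
  by (simp add: coeff2_def px_def)
lemma coeff2_py_mult[simp]: "coeff2 (py * f) i j = (if j = 0 then 0 else coeff2 f i (j - 1))"
  by (simp add: coeff2_def py_def)
lemma ps2_eqI: "(\<And>i j. coeff2 f i j = coeff2 g i j) \<Longrightarrow> f = g"
  by (auto simp: coeff2_def fps_eq_iff)

lemma coeff2_pxpow_mult: "coeff2 (px^k * f) i j = (if i < k then 0 else coeff2 f (i - k) j)"
  by (induction k arbitrary: i) (auto simp: mult.assoc)
lemma coeff2_pypow_mult: "coeff2 (py^k * f) i j = (if j < k then 0 else coeff2 f i (j - k))"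
  by (induction k arbitrary: j) (auto simp: mult.assoc)
lemma coeff2_mono: "coeff2 (px^k * py^l) i j = (if i = k \<and> j = l then 1 else 0)"
proof -
  have "coeff2 (px^k * py^l) i j = coeff2 (px^k * (py^l * 1)) i j" by simp
  also have "\<dots> = (if i = k \<and> j = l then 1 else 0)"
    unfolding coeff2_pxpow_mult coeff2_pypow_mult by auto
  finally show ?thesis .
qed

definition lin :: "'a::comm_ring_1 \<Rightarrow> 'a \<Rightarrow> 'a ps2" where "lin p q = C p * px + C q * py"

lemma coeff2_lin_mult[simp]: "coeff2 (lin p q * f) i j =
   p * (if i = 0 then 0 else coeff2 f (i - 1) j) + q * (if j = 0 then 0 else coeff2 f i (j - 1))"
proof -
  have "lin p q * f = C p * (px * f) + C q * (py * f)" by (simp add: lin_def algebra_simps)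
  then show ?thesis by simp
qed
lemma coeff2_lin[simp]: "coeff2 (lin p q) i j = (if i = 1 \<and> j = 0 then p else if i = 0 \<and> j = 1 then q else 0)"
  using coeff2_lin_mult[of p q 1 i j] by auto

fun cco :: "'a::comm_ring_1 cub \<Rightarrow> nat \<Rightarrow> nat \<Rightarrow> 'a" where
  "cco (Cub a b c d) i j = (if i = 3 \<and> j = 0 then a else if i = 2 \<and> j = 1 then b else
      if i = 1 \<and> j = 2 then c else if i = 0 \<and> j = 3 then d else 0)"

lemma cco_low: "i + j \<noteq> 3 \<Longrightarrow> cco x i j = 0"
  by (cases x) auto
lemma cco_cadd: "cco (cadd x y) i j = cco x i j + cco y i j"
  by (cases x; cases y) auto
lemma cco_csc: "cco (csc u x) i j = u * cco x i j"
  by (cases x) auto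

definition cub_of :: "'a::comm_ring_1 ps2 \<Rightarrow> 'a cub" where
  "cub_of f = Cub (coeff2 f 3 0) (coeff2 f 2 1) (coeff2 f 1 2) (coeff2 f 0 3)"

fun emb :: "'a::comm_ring_1 cub \<Rightarrow> 'a ps2" where
  "emb (Cub a b c d) = C a * (px^3 * py^0) + C b * (px^2 * py^1) + C c * (px^1 * py^2) + C d * (px^0 * py^3)"

lemma coeff2_emb: "coeff2 (emb x) i j = cco x i j"
  by (cases x) (simp only: emb.simps coeff2_add coeff2_C_mult coeff2_mono cco.simps, auto)

lemma coeff2_subst2: "coeff2 (subst2 g p1 p2) i j =
   (\<Sum>(a, b) \<in> {(a, b). a + b \<le> i + j}. coeff2 g a b * coeff2 (p1 ^ a * p2 ^ b) i j)"
  by (simp add: subst2_def coeff2_def)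

lemma fin_tri: "finite {(a::nat, b::nat). a + b \<le> n}"
  by (rule finite_subset[of _ "{..n} \<times> {..n}"]) auto

lemma pow_expand: "x^3 = x*(x*x)" "x^2 = x*x" "x^1 = x" "x^0 = (1::'b::monoid_mult)"
  by (simp_all add: eval_nat_numeral)

lemma subst_coeff3:
  fixes g :: "'a::comm_ring_1 ps2"
  assumes low: "\<And>a b. a + b < 3 \<Longrightarrow> coeff2 g a b = 0" and ij: "i + j \<le> 3"
  shows "coeff2 (subst2 g (lin p q) (lin r s)) i j = cco (sub p q r s (cub_of g)) i j"
proof (cases "i + j < 3")
  case True
  have "coeff2 (subst2 g (lin p q) (lin r s)) i j = 0"
    unfolding coeff2_subst2 by (rule sum.neutral) (use True low in auto)
  moreover have "i + j \<noteq> 3" using True by simp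
  ultimately show ?thesis by (simp add: cco_low)
next
  case False
  then have ij3: "i + j = 3" using ij by simp
  let ?f = "\<lambda>(a, b). coeff2 g a b * coeff2 (lin p q ^ a * lin r s ^ b) i j"
  have "(\<Sum>x \<in> {(a, b). a + b \<le> i + j}. ?f x) = (\<Sum>x \<in> {(3,0),(2,1),(1,2),(0,3)}. ?f x)"
  proof (rule sum.mono_neutral_right)
    show "finite {(a, b). a + b \<le> i + j}" by (rule fin_tri)
    show "{(3, 0), (2, 1), (1, 2), (0, 3)} \<subseteq> {(a::nat, b::nat). a + b \<le> i + j}" using ij3 by auto
    show "\<forall>x\<in>{(a, b). a + b \<le> i + j} - {(3, 0), (2, 1), (1, 2), (0, 3)}. ?f x = 0"
    proof
      fix x assume x: "x \<in> {(a, b). a + b \<le> i + j} - {(3, 0), (2, 1), (1, 2), (0::nat, 3::nat)}"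
      obtain a b where xab: "x = (a, b)" by (cases x)
      have h: "a + b \<le> i + j" "(a, b) \<notin> {(3, 0), (2, 1), (1, 2), (0, 3)}" using x xab by auto
      have "a + b \<noteq> 3"
      proof
        assume a3: "a + b = 3"
        then have "a = 0 \<or> a = 1 \<or> a = 2 \<or> a = 3" by arith
        then show False using h(2) a3 by auto
      qed
      then have "a + b < 3" using h(1) ij3 by simp
      then show "?f x = 0" using low xab by simp
    qed
  qed
  also have "\<dots> = ?f (3,0) + ?f (2,1) + ?f (1,2) + ?f (0,3)" by simp
  finally have e: "coeff2 (subst2 g (lin p q) (lin r s)) i j = ?f (3,0) + ?f (2,1) + ?f (1,2) + ?f (0,3)"
    unfolding coeff2_subst2 by simp
  have "(i = 3 \<and> j = 0) \<or> (i = 2 \<and> j = 1) \<or> (i = 1 \<and> j = 2) \<or> (i = 0 \<and> j = 3)" using ij3 by auto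
  then show ?thesis unfolding e
    by (elim disjE) (simp_all add: cub_of_def pow_expand mult.assoc algebra_simps)
qed



lemma coeff2_trunc2: "coeff2 (trunc2 k g) i j = (if i + j \<le> k then coeff2 g i j else 0)"
  by (simp add: trunc2_def coeff2_def)

lemma bridge:
  fixes f1 f2 :: "'a::field ps2"
  assumes low1: "\<And>a b. a + b < 3 \<Longrightarrow> coeff2 f1 a b = 0"
    and low2: "\<And>a b. a + b < 3 \<Longrightarrow> coeff2 f2 a b = 0"
    and ce: "ceq (cub_of f1, cub_of f2) (g1, g2)"
  shows "K3_equiv (f1, f2) (emb g1, emb g2)"
proof -
  from ce obtain p q r s u v w z where d1: "p*s - q*r \<noteq> 0" and d2: "u*z - v*w \<noteq> 0"
    and eq: "(g1, g2) = act p q r s u v w z (cub_of f1, cub_of f2)"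
    unfolding ceq_def by blast
  have g1: "g1 = cadd (csc u (sub p q r s (cub_of f1))) (csc v (sub p q r s (cub_of f2)))"
   and g2: "g2 = cadd (csc w (sub p q r s (cub_of f1))) (csc z (sub p q r s (cub_of f2)))"
    using eq by (simp_all add: act_def)
  let ?U = "((C u, C v), (C w, C z))"
  let ?\<phi> = "(lin p q, lin r s)"
  have GL: "is_GL2 ?U" using d2 by (simp add: is_GL2_def)
  have aut: "is_aut ?\<phi>" using d1 by (simp add: is_aut_def in_max_def)
  have c1: "coeff2 (trunc2 3 (C u * subst2 f1 (lin p q) (lin r s) + C v * subst2 f2 (lin p q) (lin r s))) i j
      = coeff2 (trunc2 3 (emb g1)) i j" for i j
    unfolding coeff2_trunc2 g1 coeff2_emb cco_cadd cco_csc
    using subst_coeff3[OF low1, of i j p q r s] subst_coeff3[OF low2, of i j p q r s] by simp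
  have c2: "coeff2 (trunc2 3 (C w * subst2 f1 (lin p q) (lin r s) + C z * subst2 f2 (lin p q) (lin r s))) i j
      = coeff2 (trunc2 3 (emb g2)) i j" for i j
    unfolding coeff2_trunc2 g2 coeff2_emb cco_cadd cco_csc
    using subst_coeff3[OF low1, of i j p q r s] subst_coeff3[OF low2, of i j p q r s] by simp
  have jet: "jet 3 (contact_act ?U ?\<phi> (f1, f2)) = jet 3 (emb g1, emb g2)"
    unfolding jet_def contact_act_def Let_def
    using ps2_eqI[OF c1] ps2_eqI[OF c2] by simp
  show ?thesis unfolding K3_equiv_def using GL aut jet by blast
qed

lemma emb_forms:
  "emb (Cub 1 0 0 0) = px^3" "emb (Cub 0 0 0 0) = (0::'a::comm_ring_1 ps2)"
  "emb (Cub 0 1 0 0) = px^2 * py" "emb (Cub 0 0 1 0) = px * py^2"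
  "emb (Cub 0 1 0 1) = py^3 + px^2 * py" "emb (Cub 0 0 0 1) = py^3"
  "emb (Cub 1 0 1 0) = px^3 + px * py^2" "emb (Cub 1 0 0 1) = px^3 + py^3"
  "emb (Cub 1 1 0 0) = px^3 + px^2 * py"
  "emb (Cub 0 l 0 1) = py^3 + C l * px^2 * py"
  by (simp_all only: emb.simps fps_const_1_eq_1 fps_const_0_eq_0 mult_1_left mult_zero_left power_0
      mult_1_right add_0_right add_0_left power_one_right mult.assoc add.commute)

theorem proposition5p1:
  fixes f1 f2 :: "'a::alg_closed_field ps2"
  assumes "CHAR('a) > 3"
    and "ICIS f1 f2"
    and "unimodal (f1, f2)"
    and "ord2 f1 = 3"
    and "ord2 f2 \<ge> 3"
  shows "K3_equiv (f1, f2) (px ^ 3, 0)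
       \<or> K3_equiv (f1, f2) (px ^ 3, px ^ 2 * py)
       \<or> K3_equiv (f1, f2) (px ^ 3, px * py ^ 2)
       \<or> K3_equiv (f1, f2) (px ^ 3, py ^ 3 + px ^ 2 * py)
       \<or> K3_equiv (f1, f2) (px ^ 3, py ^ 3)
       \<or> K3_equiv (f1, f2) (px ^ 2 * py, 0)
       \<or> K3_equiv (f1, f2) (px ^ 2 * py, px * py ^ 2)
       \<or> K3_equiv (f1, f2) (px ^ 2 * py, px ^ 3 + px * py ^ 2)
       \<or> (\<exists>c::'a. c \<noteq> 0 \<and>
            K3_equiv (f1, f2) (px ^ 3 + px ^ 2 * py, py ^ 3 + fps_const (fps_const c) * px ^ 2 * py))
       \<or> K3_equiv (f1, f2) (px ^ 2 * py, px ^ 3 + py ^ 3)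
       \<or> K3_equiv (f1, f2) (px ^ 3 + px * py ^ 2, 0)"
proof -
  have two: "(2::'a) \<noteq> 0"
  proof
    assume "(2::'a) = 0"
    then have "of_nat 2 = (0::'a)" by simp
    then have "CHAR('a) dvd 2" by (simp only: of_nat_eq_0_iff_char_dvd)
    then have "CHAR('a) \<le> 2" by (rule dvd_imp_le) simp
    then show False using assms(1) by simp
  qed
  have three: "(3::'a) \<noteq> 0"
  proof
    assume "(3::'a) = 0"
    then have "of_nat 3 = (0::'a)" by simp
    then have "CHAR('a) dvd 3" by (simp only: of_nat_eq_0_iff_char_dvd)
    then have "CHAR('a) \<le> 3" by (rule dvd_imp_le) simp
    then show False using assms(1) by simp
  qed
  have f1nz: "f1 \<noteq> 0"
  proof
    assume "f1 = 0"
    have rs: "regular_seq2 f1 f2" using assms(2) unfolding ICIS_def by (elim conjE)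
    have r1: "\<forall>g. g * f1 = 0 \<longrightarrow> g = 0" using rs unfolding regular_seq2_def by (elim conjE)
    have "(1::'a ps2) * f1 = 0" using \<open>f1 = 0\<close> by (simp only: mult_zero_right)
    then have "(1::'a ps2) = 0" using r1 by blast
    then show False by (rule one_neq_zero[THEN notE])
  qed
  have "\<exists>i j. coeff2 f1 i j \<noteq> 0"
  proof (rule ccontr)
    assume "\<not> ?thesis"
    then have "f1 = 0" by (intro ps2_eqI) simp
    then show False using f1nz by simp
  qed
  then obtain i0 j0 where ij0: "coeff2 f1 i0 j0 \<noteq> 0" by blast
  have "\<exists>n i j. i + j = n \<and> coeff2 f1 i j \<noteq> 0" using ij0 by blast
  then have "\<exists>i j. i + j = ord2 f1 \<and> coeff2 f1 i j \<noteq> 0"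
    unfolding ord2_def by (rule LeastI_ex)
  then obtain i1 j1 where ij1: "i1 + j1 = 3" "coeff2 f1 i1 j1 \<noteq> 0" using assms(4) by auto
  have low1: "coeff2 f1 a b = 0" if "a + b < 3" for a b
  proof (rule ccontr)
    assume "coeff2 f1 a b \<noteq> 0"
    then have "\<exists>i j. i + j = a + b \<and> coeff2 f1 i j \<noteq> 0" by blast
    then have "ord2 f1 \<le> a + b" unfolding ord2_def by (rule Least_le)
    then show False using that assms(4) by simp
  qed
  have low2: "coeff2 f2 a b = 0" if "a + b < 3" for a b
  proof (rule ccontr)
    assume "coeff2 f2 a b \<noteq> 0"
    then have "\<exists>i j. i + j = a + b \<and> coeff2 f2 i j \<noteq> 0" by blast
    then have "ord2 f2 \<le> a + b" unfolding ord2_def by (rule Least_le)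
    then show False using that assms(5) by simp
  qed
  have cnz: "cub_of f1 \<noteq> Cub 0 0 0 0"
  proof
    assume h: "cub_of f1 = Cub 0 0 0 0"
    have "i1 = 0 \<or> i1 = 1 \<or> i1 = 2 \<or> i1 = 3" using ij1(1) by arith
    then show False using h ij1 by (auto simp: cub_of_def)
  qed
  obtain P where nP: "normal P" and ceP: "ceq (cub_of f1, cub_of f2) P"
    using Main_model[OF two three cnz] by blast
  obtain g1 g2 where P: "P = (g1, g2)" by (cases P)
  have K: "K3_equiv (f1, f2) (emb g1, emb g2)"
    by (rule bridge[OF low1 low2 ceP[unfolded P]])
  have cases: "(g1 = Cub 1 0 0 0 \<and> g2 = Cub 0 0 0 0) \<or> (g1 = Cub 1 0 0 0 \<and> g2 = Cub 0 1 0 0) \<or>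
    (g1 = Cub 1 0 0 0 \<and> g2 = Cub 0 0 1 0) \<or> (g1 = Cub 1 0 0 0 \<and> g2 = Cub 0 1 0 1) \<or>
    (g1 = Cub 1 0 0 0 \<and> g2 = Cub 0 0 0 1) \<or> (g1 = Cub 0 1 0 0 \<and> g2 = Cub 0 0 0 0) \<or>
    (g1 = Cub 0 1 0 0 \<and> g2 = Cub 0 0 1 0) \<or> (g1 = Cub 0 1 0 0 \<and> g2 = Cub 1 0 1 0) \<or>
    (g1 = Cub 0 1 0 0 \<and> g2 = Cub 1 0 0 1) \<or> (g1 = Cub 1 0 1 0 \<and> g2 = Cub 0 0 0 0) \<or>
    (\<exists>l. l \<noteq> 0 \<and> g1 = Cub 1 1 0 0 \<and> g2 = Cub 0 l 0 1)"
    using nP unfolding P normal_def by (simp only: insert_iff prod.inject empty_iff simp_thms disj_assoc)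
  from cases show ?thesis
  proof (elim disjE exE conjE)
    assume "g1 = Cub 1 0 0 0" "g2 = Cub 0 0 0 0" then show ?thesis using K by (simp only: emb_forms(1-9) simp_thms)
  next
    assume "g1 = Cub 1 0 0 0" "g2 = Cub 0 1 0 0" then show ?thesis using K by (simp only: emb_forms(1-9) simp_thms)
  next
    assume "g1 = Cub 1 0 0 0" "g2 = Cub 0 0 1 0" then show ?thesis using K by (simp only: emb_forms(1-9) simp_thms)
  next
    assume "g1 = Cub 1 0 0 0" "g2 = Cub 0 1 0 1" then show ?thesis using K by (simp only: emb_forms(1,5) simp_thms)
  next
    assume "g1 = Cub 1 0 0 0" "g2 = Cub 0 0 0 1" then show ?thesis using K by (simp only: emb_forms(1-9) simp_thms)
  next
    assume "g1 = Cub 0 1 0 0" "g2 = Cub 0 0 0 0" then show ?thesis using K by (simp only: emb_forms(1-9) simp_thms)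
  next
    assume "g1 = Cub 0 1 0 0" "g2 = Cub 0 0 1 0" then show ?thesis using K by (simp only: emb_forms(1-9) simp_thms)
  next
    assume "g1 = Cub 0 1 0 0" "g2 = Cub 1 0 1 0" then show ?thesis using K by (simp only: emb_forms(1-9) simp_thms)
  next
    assume "g1 = Cub 0 1 0 0" "g2 = Cub 1 0 0 1" then show ?thesis using K by (simp only: emb_forms(1-9) simp_thms)
  next
    assume "g1 = Cub 1 0 1 0" "g2 = Cub 0 0 0 0" then show ?thesis using K by (simp only: emb_forms(1-9) simp_thms)
  next
    fix l :: 'a
    assume "l \<noteq> 0" "g1 = Cub 1 1 0 0" "g2 = Cub 0 l 0 1"
    then have "l \<noteq> 0 \<and> K3_equiv (f1, f2) (px ^ 3 + px ^ 2 * py, py ^ 3 + fps_const (fps_const l) * px ^ 2 * py)"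
      using K by (simp only: emb_forms(9,10) simp_thms)
    then show ?thesis by blast
  qed
qed

end
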